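(* For each $k\ge0$ there is a finite $k$-graph $\Gamma$ whose topological realisation $X_\Gamma$ is homeomorphic to the $k$-sphere $S^k$.
   Context: A $k$-graph is a countable small category $\Lambda$ with a functor $d:\Lambda\to\mathbb{N}^k$ ($\mathbb{N}^0=\{0\}$) such that, writing $\Lambda^n=d^{-1}(n)$, composition is a bijection from $\{(\mu,\nu)\in\Lambda^m\times\Lambda^n:s(\mu)=r(\nu)\}$ onto $\Lambda^{m+n}$; finite means finitely many morphisms. For $k\ge1$: $\lambda(m,n)$ is the unique $\beta\in\Lambda^{n-m}$ with $\lambda=\alpha\beta\gamma$, $d(\alpha)=m$; $\lceil t\rceil,\lfloor t\rfloor$ are coordinatewise ceiling/floor; $[0,m]=\{t\in\mathbb{R}^k:0\le t\le m\}$; the topological realisation $X_\Lambda$ is the quotient of $\bigsqcup_\lambda\{\lambda\}\times[0,d(\lambda)]$ by $(\mu,s)\sim(\nu,t)\iff\mu(\lfloor s\rfloor,\lceil s\rceil)=\nu(\lfloor t\rfloor,\lceil t\rceil)$ and $s-\lfloor s\rfloor=t-\lfloor t\rfloor$. For $k=0$, $\Lambda=\Lambda^0$ and $X_\Lambda$ is the discrete space $\Lambda^0$ ($S^0$ is a two-point discrete space). *)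

theory Defs
  imports "HOL-Analysis.Analysis"
begin

definition eqclass :: "'a topology \<Rightarrow> ('a \<Rightarrow> 'a \<Rightarrow> bool) \<Rightarrow> 'a \<Rightarrow> 'a set" where
  "eqclass X R x = {y \<in> topspace X. R x y}"

definition quotient_topology :: "'a topology \<Rightarrow> ('a \<Rightarrow> 'a \<Rightarrow> bool) \<Rightarrow> 'a set topology" where
  "quotient_topology X R = topology (\<lambda>U. U \<subseteq> eqclass X R ` topspace X \<and>
       openin X {x \<in> topspace X. eqclass X R x \<in> U})"

lemma istopology_quotient:
  "istopology (\<lambda>U. U \<subseteq> eqclass X R ` topspace X \<and>
       openin X {x \<in> topspace X. eqclass X R x \<in> U})"
proof -
  have 1: "{x \<in> topspace X. eqclass X R x \<in> S \<inter> T} =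
           {x \<in> topspace X. eqclass X R x \<in> S} \<inter> {x \<in> topspace X. eqclass X R x \<in> T}" for S T
    by auto
  have 2: "{x \<in> topspace X. eqclass X R x \<in> \<Union>K} =
           \<Union>((\<lambda>U. {x \<in> topspace X. eqclass X R x \<in> U}) ` K)" for K
    by auto
  show ?thesis
    unfolding istopology_def 1 2 by auto
qed

text \<open>A small category is rendered single-sorted: objects are identified with their
  identity morphisms; r, s give the identity morphisms of range and source.\<close>

definition Nk :: "nat \<Rightarrow> (nat \<Rightarrow> nat) set" where
  "Nk k = {m. \<forall>i\<ge>k. m i = 0}"

definition is_category :: "'a set \<Rightarrow> ('a \<Rightarrow> 'a) \<Rightarrow> ('a \<Rightarrow> 'a) \<Rightarrow> ('a \<Rightarrow> 'a \<Rightarrow> 'a) \<Rightarrow> bool" where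
  "is_category L r s cmp \<longleftrightarrow>
     (\<forall>x\<in>L. r x \<in> L \<and> s x \<in> L \<and>
        r (r x) = r x \<and> s (r x) = r x \<and> r (s x) = s x \<and> s (s x) = s x \<and>
        cmp (r x) x = x \<and> cmp x (s x) = x) \<and>
     (\<forall>x\<in>L. \<forall>y\<in>L. s x = r y \<longrightarrow>
        cmp x y \<in> L \<and> r (cmp x y) = r x \<and> s (cmp x y) = s y) \<and>
     (\<forall>x\<in>L. \<forall>y\<in>L. \<forall>z\<in>L. s x = r y \<and> s y = r z \<longrightarrow>
        cmp (cmp x y) z = cmp x (cmp y z))"

definition is_kgraph :: "nat \<Rightarrow> 'a set \<Rightarrow> ('a \<Rightarrow> 'a) \<Rightarrow> ('a \<Rightarrow> 'a) \<Rightarrow> ('a \<Rightarrow> 'a \<Rightarrow> 'a)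
     \<Rightarrow> ('a \<Rightarrow> nat \<Rightarrow> nat) \<Rightarrow> bool" where
  "is_kgraph k L r s cmp d \<longleftrightarrow>
     countable L \<and> is_category L r s cmp \<and>
     \<comment> \<open>d is a functor to N^k\<close>
     (\<forall>x\<in>L. d x \<in> Nk k \<and> d (r x) = (\<lambda>i. 0)) \<and>
     (\<forall>x\<in>L. \<forall>y\<in>L. s x = r y \<longrightarrow> d (cmp x y) = (\<lambda>i. d x i + d y i)) \<and>
     \<comment> \<open>unique factorisation property\<close>
     (\<forall>m\<in>Nk k. \<forall>n\<in>Nk k. \<forall>l\<in>L. d l = (\<lambda>i. m i + n i) \<longrightarrow>
        (\<exists>!(x, y). x \<in> L \<and> y \<in> L \<and> d x = m \<and> d y = n \<and> s x = r y \<and> cmp x y = l))"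

definition segment :: "'a set \<Rightarrow> ('a \<Rightarrow> 'a) \<Rightarrow> ('a \<Rightarrow> 'a) \<Rightarrow> ('a \<Rightarrow> 'a \<Rightarrow> 'a)
     \<Rightarrow> ('a \<Rightarrow> nat \<Rightarrow> nat) \<Rightarrow> 'a \<Rightarrow> (nat \<Rightarrow> nat) \<Rightarrow> (nat \<Rightarrow> nat) \<Rightarrow> 'a" where
  "segment L r s cmp d l m n = (THE b. b \<in> L \<and> d b = (\<lambda>i. n i - m i) \<and>
      (\<exists>a\<in>L. \<exists>c\<in>L. d a = m \<and> s a = r b \<and> s b = r c \<and> cmp (cmp a b) c = l))"

definition cube :: "nat \<Rightarrow> (nat \<Rightarrow> nat) \<Rightarrow> (nat \<Rightarrow> real) set" where
  "cube k m = {t. (\<forall>i<k. 0 \<le> t i \<and> t i \<le> real (m i)) \<and> (\<forall>i\<ge>k. t i = 0)}"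

definition flr :: "(nat \<Rightarrow> real) \<Rightarrow> nat \<Rightarrow> nat" where
  "flr t = (\<lambda>i. nat \<lfloor>t i\<rfloor>)"

definition ceil :: "(nat \<Rightarrow> real) \<Rightarrow> nat \<Rightarrow> nat" where
  "ceil t = (\<lambda>i. nat \<lceil>t i\<rceil>)"

definition realisation_rel :: "'a set \<Rightarrow> ('a \<Rightarrow> 'a) \<Rightarrow> ('a \<Rightarrow> 'a) \<Rightarrow> ('a \<Rightarrow> 'a \<Rightarrow> 'a)
     \<Rightarrow> ('a \<Rightarrow> nat \<Rightarrow> nat) \<Rightarrow> ('a \<times> (nat \<Rightarrow> real)) \<Rightarrow> ('a \<times> (nat \<Rightarrow> real)) \<Rightarrow> bool" where
  "realisation_rel L r s cmp d = (\<lambda>(mu, a) (nu, b).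
      segment L r s cmp d mu (flr a) (ceil a) = segment L r s cmp d nu (flr b) (ceil b) \<and>
      (\<lambda>i. a i - of_int \<lfloor>a i\<rfloor>) = (\<lambda>i. b i - of_int \<lfloor>b i\<rfloor>))"

definition realisation :: "nat \<Rightarrow> 'a set \<Rightarrow> ('a \<Rightarrow> 'a) \<Rightarrow> ('a \<Rightarrow> 'a) \<Rightarrow> ('a \<Rightarrow> 'a \<Rightarrow> 'a)
     \<Rightarrow> ('a \<Rightarrow> nat \<Rightarrow> nat) \<Rightarrow> ('a \<times> (nat \<Rightarrow> real)) set topology" where
  "realisation k L r s cmp d =
     quotient_topology
       (sum_topology (\<lambda>l. subtopology (Euclidean_space k) (cube k (d l))) L)
       (realisation_rel L r s cmp d)"

end

theory Submission
  imports Defs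
begin


lemma openin_quotient_topology:
  "openin (quotient_topology X R) U \<longleftrightarrow>
     U \<subseteq> eqclass X R ` topspace X \<and> openin X {x \<in> topspace X. eqclass X R x \<in> U}"
  unfolding quotient_topology_def using istopology_quotient[of X R]
  by (simp add: topology_inverse')

lemma topspace_quotient_topology:
  "topspace (quotient_topology X R) = eqclass X R ` topspace X"
proof -
  have "openin (quotient_topology X R) (eqclass X R ` topspace X)"
    unfolding openin_quotient_topology
  proof
    have "{x \<in> topspace X. eqclass X R x \<in> eqclass X R ` topspace X} = topspace X" by auto
    then show "openin X {x \<in> topspace X. eqclass X R x \<in> eqclass X R ` topspace X}" by simp
  qed simp
  then have "eqclass X R ` topspace X \<subseteq> topspace (quotient_topology X R)"
    by (simp add: openin_subset)
  moreover have "topspace (quotient_topology X R) \<subseteq> eqclass X R ` topspace X"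
    using openin_quotient_topology[of X R "topspace (quotient_topology X R)"] by simp
  ultimately show ?thesis by blast
qed

lemma continuous_map_eqclass:
  "continuous_map X (quotient_topology X R) (eqclass X R)"
  unfolding continuous_map_def openin_quotient_topology topspace_quotient_topology
  by auto

lemma quotient_homeomorphic:
  assumes cX: "compact_space X" and hY: "Hausdorff_space Y"
    and g: "continuous_map X Y g" and sur: "g ` topspace X = topspace Y"
    and R: "\<And>x y. x \<in> topspace X \<Longrightarrow> y \<in> topspace X \<Longrightarrow> R x y \<longleftrightarrow> g x = g y"
  shows "quotient_topology X R homeomorphic_space Y"
proof -
  let ?Q = "quotient_topology X R"
  let ?q = "eqclass X R"
  define h where "h C = g (SOME x. x \<in> C)" for C
  have cls: "?q x = {y \<in> topspace X. g x = g y}" if "x \<in> topspace X" for x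
    using R that unfolding eqclass_def by auto
  have hq: "h (?q x) = g x" if "x \<in> topspace X" for x
  proof -
    have "x \<in> ?q x" using cls that by auto
    then have "(SOME y. y \<in> ?q x) \<in> ?q x" by (rule someI)
    then show ?thesis unfolding h_def using cls[OF that] by auto
  qed
  have cont: "continuous_map ?Q Y h"
    unfolding continuous_map_def
  proof (intro conjI allI impI)
    show "h \<in> topspace ?Q \<rightarrow> topspace Y"
      using hq g by (auto simp: topspace_quotient_topology continuous_map_def)
    fix U assume U: "openin Y U"
    have "{x \<in> topspace X. ?q x \<in> {C \<in> topspace ?Q. h C \<in> U}} = {x \<in> topspace X. g x \<in> U}"
      using hq by (auto simp: topspace_quotient_topology)
    moreover have "openin X {x \<in> topspace X. g x \<in> U}"
      using g U by (simp add: continuous_map_def)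
    ultimately show "openin ?Q {C \<in> topspace ?Q. h C \<in> U}"
      unfolding openin_quotient_topology topspace_quotient_topology by auto
  qed
  have cQ: "compact_space ?Q"
  proof -
    have "compactin ?Q (?q ` topspace X)"
      using image_compactin[OF _ continuous_map_eqclass] cX
      by (simp add: compact_space_def)
    then show ?thesis by (simp add: compact_space_def topspace_quotient_topology)
  qed
  have sur': "h ` topspace ?Q = topspace Y"
    using sur hq by (force simp: topspace_quotient_topology image_iff)
  have inj: "inj_on h (topspace ?Q)"
  proof (rule inj_onI)
    fix C D assume "C \<in> topspace ?Q" "D \<in> topspace ?Q" "h C = h D"
    then obtain x y where "x \<in> topspace X" "y \<in> topspace X" "C = ?q x" "D = ?q y" "g x = g y"
      using hq by (auto simp: topspace_quotient_topology)
    then show "C = D" using cls by auto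
  qed
  have "homeomorphic_map ?Q Y h"
    using bijective_closed_imp_homeomorphic_map[OF cont continuous_imp_closed_map[OF cont cQ hY] sur' inj] .
  then show ?thesis using homeomorphic_map_imp_homeomorphic_space by blast
qed

lemma continuous_map_from_sum:
  assumes "\<And>i. i \<in> I \<Longrightarrow> continuous_map (X i) Y (\<lambda>x. f (i, x))"
  shows "continuous_map (sum_topology X I) Y f"
  unfolding continuous_map_def
proof (intro conjI allI impI)
  show "f \<in> topspace (sum_topology X I) \<rightarrow> topspace Y"
    using assms by (force simp: continuous_map_def Pi_iff)
  fix U assume U: "openin Y U"
  show "openin (sum_topology X I) {x \<in> topspace (sum_topology X I). f x \<in> U}"
    unfolding openin_sum_topology
  proof (intro conjI ballI)
    fix i assume i: "i \<in> I"
    have "{x. (i, x) \<in> {x \<in> topspace (sum_topology X I). f x \<in> U}} = {x \<in> topspace (X i). f (i,x) \<in> U}"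
      using i by auto
    then show "openin (X i) {x. (i, x) \<in> {x \<in> topspace (sum_topology X I). f x \<in> U}}"
      using assms[OF i] U by (simp add: continuous_map_def)
  qed auto
qed

lemma compact_space_sum:
  assumes "finite I" "\<And>i. i \<in> I \<Longrightarrow> compact_space (X i)"
  shows "compact_space (sum_topology X I)"
proof -
  have "topspace (sum_topology X I) = (\<Union>i\<in>I. (\<lambda>x. (i,x)) ` topspace (X i))"
    by auto
  moreover have "compactin (sum_topology X I) (\<Union>i\<in>I. (\<lambda>x. (i,x)) ` topspace (X i))"
    using assms
    by (intro compactin_Union) (auto intro!: image_compactin continuous_map_component_injection
        simp: compact_space_def)
  ultimately show ?thesis by (simp add: compact_space_def)
qed



lemma Max_affine:
  fixes f :: "'a \<Rightarrow> real"
  assumes "finite S" "S \<noteq> {}" "c \<ge> 0"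
  shows "Max ((\<lambda>x. c * f x + e) ` S) = c * Max (f ` S) + e"
proof -
  have "mono (\<lambda>u::real. c * u + e)" using assms(3) by (auto intro!: monoI mult_left_mono)
  from mono_Max_commute[OF this, of "f ` S"] assms show ?thesis by (simp add: image_image)
qed

lemma Min_affine:
  fixes f :: "'a \<Rightarrow> real"
  assumes "finite S" "S \<noteq> {}" "c \<ge> 0"
  shows "Min ((\<lambda>x. c * f x + e) ` S) = c * Min (f ` S) + e"
proof -
  have "mono (\<lambda>u::real. c * u + e)" using assms(3) by (auto intro!: monoI mult_left_mono)
  from mono_Min_commute[OF this, of "f ` S"] assms show ?thesis by (simp add: image_image)
qed

definition mx :: "nat \<Rightarrow> (nat \<Rightarrow> real) \<Rightarrow> real" where "mx k p = Max (p ` {..<k})"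
definition mn :: "nat \<Rightarrow> (nat \<Rightarrow> real) \<Rightarrow> real" where "mn k p = Min (p ` {..<k})"
definition sg :: "bool \<Rightarrow> real" where "sg b = (if b then 1 else -1)"
definition Phi :: "nat \<Rightarrow> (nat \<Rightarrow> real) \<Rightarrow> bool \<Rightarrow> bool \<Rightarrow> nat \<Rightarrow> real" where
  "Phi k p a b = (\<lambda>c. if c < k - 1 then p c - p (k-1) else if c = k - 1 then sg a * (1 - mx k p)
                      else if c = k then sg b * mn k p else 0)"
definition nrm :: "nat \<Rightarrow> (nat \<Rightarrow> real) \<Rightarrow> real" where "nrm k z = sqrt (\<Sum>c\<le>k. (z c)\<^sup>2)"
definition Fm :: "nat \<Rightarrow> (nat \<Rightarrow> real) \<Rightarrow> bool \<Rightarrow> bool \<Rightarrow> nat \<Rightarrow> real" where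
  "Fm k p a b = (\<lambda>c. Phi k p a b c / nrm k (Phi k p a b))"
definition valid :: "nat \<Rightarrow> (nat \<Rightarrow> real) \<Rightarrow> bool" where
  "valid k p \<longleftrightarrow> (\<forall>c<k. 0 \<le> p c \<and> p c \<le> 1) \<and> (\<forall>c\<ge>k. p c = 0)"

lemma sg_abs[simp]: "\<bar>sg a\<bar> = 1" and sg_nz[simp]: "sg a \<noteq> 0"
  by (auto simp: sg_def)

lemma sg_eq_iff[simp]: "sg a = sg b \<longleftrightarrow> a = b"
  by (auto simp: sg_def)

context
  fixes k j :: nat assumes kj: "k = Suc j"
begin

lemma k: "k \<ge> 1" using kj by simp

lemma fin_ne: "finite {..<k}" "{..<k} \<noteq> {}"
proof -
  have "0 \<in> {..<k}" using kj by simp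
  then show "finite {..<k}" "{..<k} \<noteq> {}" by auto
qed

lemma Phi_km1: "Phi k p a b (j) = sg a * (1 - mx k p)"
  using kj by (simp add: Phi_def)
lemma Phi_k: "Phi k p a b k = sg b * mn k p"
  using kj by (simp add: Phi_def)

lemma mx_le: "valid k p \<Longrightarrow> mx k p \<le> 1" and mn_ge: "valid k p \<Longrightarrow> 0 \<le> mn k p"
  using fin_ne by (auto simp: mx_def mn_def valid_def)

lemma mn_le_mx: "mn k p \<le> mx k p"
  using fin_ne unfolding mx_def mn_def
  by (meson Max_ge Min_le finite_imageI image_eqI lessThan_iff order.trans k less_le_trans zero_less_one
      le_less_trans)

lemma le_mx: "c < k \<Longrightarrow> p c \<le> mx k p" and mn_le: "c < k \<Longrightarrow> mn k p \<le> p c"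
  by (auto simp: mx_def mn_def)

lemma mx_eq: "\<exists>c<k. mx k p = p c"
proof -
  have "Max (p ` {..<k}) \<in> p ` {..<k}" using fin_ne by (intro Max_in) auto
  then show ?thesis by (auto simp: mx_def)
qed

lemma mn_eq: "\<exists>c<k. mn k p = p c"
proof -
  have "Min (p ` {..<k}) \<in> p ` {..<k}" using fin_ne by (intro Min_in) auto
  then show ?thesis by (auto simp: mn_def)
qed

definition wv :: "(nat \<Rightarrow> real) \<Rightarrow> nat \<Rightarrow> real" where
  "wv z = (\<lambda>c. if c < j then z c else 0)"
definition DD :: "(nat \<Rightarrow> real) \<Rightarrow> real" where
  "DD z = Max (wv z ` {..<k}) - Min (wv z ` {..<k})"

lemma wv_Phi: "c < k \<Longrightarrow> wv (Phi k p a b) c = 1 * p c + (- p (j))"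
proof (cases "c < j")
  case False
  assume "c < k"
  with False kj have "c = j" by linarith
  then show ?thesis by (simp add: wv_def)
qed (auto simp: wv_def Phi_def kj)

lemma DD_Phi: "DD (Phi k p a b) = mx k p - mn k p"
proof -
  have "wv (Phi k p a b) ` {..<k} = (\<lambda>c. 1 * p c + (- p (j))) ` {..<k}"
    using wv_Phi by (auto simp: image_def)
  then show ?thesis unfolding DD_def mx_def mn_def
    using Max_affine[OF fin_ne, of 1 p "- p (j)"] Min_affine[OF fin_ne, of 1 p "- p (j)"] by simp
qed

lemma DD_scale: "l \<ge> 0 \<Longrightarrow> DD (\<lambda>c. l * z c) = l * DD z"
proof -
  assume l: "l \<ge> 0"
  have "wv (\<lambda>c. l * z c) = (\<lambda>c. l * wv z c + 0)" by (auto simp: wv_def)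
  then show ?thesis unfolding DD_def
    using Max_affine[OF fin_ne l, of "wv z" 0] Min_affine[OF fin_ne l, of "wv z" 0]
    by (simp add: right_diff_distrib)
qed

lemma Phi_abs: "valid k p \<Longrightarrow> \<bar>Phi k p a b (j)\<bar> + \<bar>Phi k p a b k\<bar> = 1 - DD (Phi k p a b)"
  using mx_le mn_ge by (auto simp: Phi_km1 Phi_k DD_Phi abs_mult)

lemma Phi_nz: "valid k p \<Longrightarrow> nrm k (Phi k p a b) > 0"
proof -
  assume v: "valid k p"
  have "\<exists>c\<le>k. Phi k p a b c \<noteq> 0"
  proof (rule ccontr)
    assume "\<not> ?thesis"
    then have z: "\<And>c. c \<le> k \<Longrightarrow> Phi k p a b c = 0" by auto
    have "wv (Phi k p a b) = (\<lambda>c. 0)" using z kj by (auto simp: wv_def)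
    then have "DD (Phi k p a b) = 0" using fin_ne by (simp add: DD_def)
    moreover have "\<bar>Phi k p a b (j)\<bar> + \<bar>Phi k p a b k\<bar> = 0" using z kj by simp
    ultimately show False using Phi_abs[OF v] by simp
  qed
  then obtain c where c: "c \<le> k" "Phi k p a b c \<noteq> 0" by blast
  have "0 < (Phi k p a b c)\<^sup>2" using c by simp
  also have "\<dots> \<le> (\<Sum>c\<le>k. (Phi k p a b c)\<^sup>2)"
    using c by (intro member_le_sum) auto
  finally show ?thesis by (simp add: nrm_def)
qed

lemma Fm_sphere: "valid k p \<Longrightarrow> Fm k p a b \<in> topspace (nsphere k)"
proof -
  assume v: "valid k p"
  let ?z = "Phi k p a b"
  have n: "nrm k ?z > 0" using Phi_nz[OF v] .
  have "(\<Sum>c\<le>k. (Fm k p a b c)\<^sup>2) = (\<Sum>c\<le>k. (?z c)\<^sup>2) / (nrm k ?z)\<^sup>2"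
    by (simp add: Fm_def power_divide sum_divide_distrib)
  also have "(nrm k ?z)\<^sup>2 = (\<Sum>c\<le>k. (?z c)\<^sup>2)"
    unfolding nrm_def by (simp add: sum_nonneg)
  finally have "(\<Sum>c\<le>k. (Fm k p a b c)\<^sup>2) = 1" using n by (simp add: nrm_def)
  moreover have "\<forall>c\<ge>Suc k. Fm k p a b c = 0" by (auto simp: Fm_def Phi_def)
  ultimately show ?thesis by (simp add: nsphere topspace_Euclidean_space)
qed


lemma Min_wv_Phi: "Min (wv (Phi k p a b) ` {..<k}) = mn k p - p j"
proof -
  have "wv (Phi k p a b) ` {..<k} = (\<lambda>c. 1 * p c + (- p (j))) ` {..<k}"
    using wv_Phi by (auto simp: image_def)
  then show ?thesis unfolding mn_def using Min_affine[OF fin_ne, of 1 p "- p (j)"] by simp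
qed

lemma Phi_eq_labels:
  assumes "(mx k p = 1 \<or> a = a')" "(mn k p = 0 \<or> b = b')"
  shows "Phi k p a b = Phi k p a' b'"
  using assms by (auto simp: Phi_def)

lemma Fm_eq:
  assumes v: "valid k p" and v': "valid k p'"
  shows "Fm k p a b = Fm k p' a' b' \<longleftrightarrow> p = p' \<and> (mx k p = 1 \<or> a = a') \<and> (mn k p = 0 \<or> b = b')"
proof
  assume "p = p' \<and> (mx k p = 1 \<or> a = a') \<and> (mn k p = 0 \<or> b = b')"
  then show "Fm k p a b = Fm k p' a' b'"
    using Phi_eq_labels unfolding Fm_def by metis
next
  assume eq: "Fm k p a b = Fm k p' a' b'"
  define z where "z = Phi k p a b"
  define z' where "z' = Phi k p' a' b'"
  define n where "n = nrm k z"
  define n' where "n' = nrm k z'"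
  have n: "n > 0" "n' > 0" using Phi_nz[OF v] Phi_nz[OF v'] by (auto simp: n_def n'_def z_def z'_def)
  define l where "l = n / n'"
  have l: "l > 0" using n by (simp add: l_def)
  have zz: "z = (\<lambda>c. l * z' c)"
  proof
    fix c
    have "z c / n = z' c / n'" using fun_cong[OF eq, of c] by (simp add: Fm_def z_def z'_def n_def n'_def)
    then show "z c = l * z' c" using n by (simp add: l_def field_simps)
  qed
  have "1 - DD z = l * (1 - DD z')"
  proof -
    have "1 - DD z = \<bar>z j\<bar> + \<bar>z k\<bar>" using Phi_abs[OF v] by (simp add: z_def)
    also have "\<dots> = l * (\<bar>z' j\<bar> + \<bar>z' k\<bar>)" using l by (simp add: zz abs_mult distrib_left)
    also have "\<bar>z' j\<bar> + \<bar>z' k\<bar> = 1 - DD z'" using Phi_abs[OF v'] by (simp add: z'_def)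
    finally show ?thesis .
  qed
  moreover have "DD z = l * DD z'" using DD_scale[of l z'] l by (simp add: zz)
  ultimately have "l = 1" by (simp add: algebra_simps)
  then have zz': "z = z'" using zz by simp
  have mneq: "mn k p = mn k p'"
    using arg_cong[OF zz', of "\<lambda>z. \<bar>z k\<bar>"] mn_ge[OF v] mn_ge[OF v']
    by (simp add: z_def z'_def Phi_k abs_mult)
  have "p j = p' j"
    using arg_cong[OF zz', of "\<lambda>z. Min (wv z ` {..<k})"] mneq
    by (simp add: z_def z'_def Min_wv_Phi)
  have pp: "p = p'"
  proof
    fix c
    show "p c = p' c"
    proof (cases "c < k")
      case True
      then show ?thesis using arg_cong[OF zz', of "\<lambda>z. wv z c"] \<open>p j = p' j\<close>
        by (simp add: z_def z'_def wv_Phi)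
    next
      case False
      then show ?thesis using v v' by (simp add: valid_def)
    qed
  qed
  have "mx k p = 1 \<or> a = a'"
  proof (cases "mx k p = 1")
    case False
    have "sg a * (1 - mx k p) = sg a' * (1 - mx k p)"
      using arg_cong[OF zz', of "\<lambda>z. z j"] pp by (simp add: z_def z'_def Phi_km1)
    with False show ?thesis by simp
  qed simp
  moreover have "mn k p = 0 \<or> b = b'"
  proof (cases "mn k p = 0")
    case False
    have "sg b * mn k p = sg b' * mn k p"
      using arg_cong[OF zz', of "\<lambda>z. z k"] pp by (simp add: z_def z'_def Phi_k)
    with False show ?thesis by simp
  qed simp
  ultimately show "p = p' \<and> (mx k p = 1 \<or> a = a') \<and> (mn k p = 0 \<or> b = b')" using pp by simp
qed

lemma nrm_scale: "l \<ge> 0 \<Longrightarrow> nrm k (\<lambda>c. l * x c) = l * nrm k x"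
  by (simp add: nrm_def power_mult_distrib sum_distrib_left[symmetric] real_sqrt_mult)

lemma Fm_surj:
  assumes x: "x \<in> topspace (nsphere k)"
  shows "\<exists>p a b. valid k p \<and> x = Fm k p a b"
proof -
  have x0: "\<And>c. c > k \<Longrightarrow> x c = 0" and x1: "(\<Sum>c\<le>k. (x c)\<^sup>2) = 1"
    using x by (auto simp: nsphere topspace_Euclidean_space)
  define y where "y = (\<lambda>c. if c < j then x c else 0)"
  define A where "A = \<bar>x j\<bar>"
  define B where "B = \<bar>x k\<bar>"
  define Mx where "Mx = Max (y ` {..<k})"
  define Mn where "Mn = Min (y ` {..<k})"
  have MnMx: "Mn \<le> y c" "y c \<le> Mx" if "c < k" for c
    using that fin_ne by (auto simp: Mx_def Mn_def)
  have "Mn \<le> Mx" using MnMx[of 0] kj by auto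
  define s where "s = A + B + (Mx - Mn)"
  have s: "s > 0"
  proof (rule ccontr)
    assume "\<not> s > 0"
    then have "A = 0" "B = 0" "Mx = Mn" using \<open>Mn \<le> Mx\<close> by (auto simp: s_def A_def B_def)
    have "y j = 0" by (simp add: y_def)
    then have "Mn \<le> 0" "0 \<le> Mx" using MnMx[of j] kj by auto
    have "x c = 0" if ck: "c \<le> k" for c
    proof -
      consider "c < j" | "c = j" | "c = k" using ck kj by linarith
      then show ?thesis
      proof cases
        case 1
        then have "Mn \<le> x c" "x c \<le> Mx" using MnMx[of c] kj by (auto simp: y_def)
        then show ?thesis using \<open>Mx = Mn\<close> \<open>Mn \<le> 0\<close> \<open>0 \<le> Mx\<close> by linarith
      qed (use \<open>A = 0\<close> \<open>B = 0\<close> in \<open>auto simp: A_def B_def\<close>)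
    qed
    then have "(\<Sum>c\<le>k. (x c)\<^sup>2) = 0" by simp
    with x1 show False by simp
  qed
  define l where "l = 1 / s"
  have l: "l > 0" using s by (simp add: l_def)
  define p where "p = (\<lambda>c. if c < k then l * y c + (l * B - l * Mn) else 0)"
  have mnp: "mn k p = l * B"
  proof -
    have "p ` {..<k} = (\<lambda>c. l * y c + (l * B - l * Mn)) ` {..<k}" by (auto simp: p_def)
    then show ?thesis unfolding mn_def using Min_affine[OF fin_ne, of l y] l by (simp add: Mn_def)
  qed
  have mxp: "mx k p = 1 - l * A"
  proof -
    have "p ` {..<k} = (\<lambda>c. l * y c + (l * B - l * Mn)) ` {..<k}" by (auto simp: p_def)
    then have "mx k p = l * Mx + (l * B - l * Mn)"
      unfolding mx_def using Max_affine[OF fin_ne, of l y] l by (simp add: Mx_def)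
    also have "\<dots> = l * s - l * A" by (simp add: s_def algebra_simps)
    also have "l * s = 1" using s by (simp add: l_def)
    finally show ?thesis .
  qed
  have vp: "valid k p"
    unfolding valid_def
  proof (intro conjI allI impI)
    fix c assume c: "c < k"
    have "mn k p \<le> p c" "p c \<le> mx k p" using c mn_le le_mx by auto
    moreover have "0 \<le> l * B" "0 \<le> l * A" using l by (auto simp: A_def B_def)
    ultimately show "0 \<le> p c" "p c \<le> 1" using mnp mxp by linarith+
  qed (simp add: p_def)
  define a where "a = (x j \<ge> 0)"
  define b where "b = (x k \<ge> 0)"
  have ph: "Phi k p a b = (\<lambda>c. l * x c)"
  proof
    fix c
    consider "c < j" | "c = j" | "c = k" | "c > k" using kj by linarith
    then show "Phi k p a b c = l * x c"
    proof cases
      case 1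
      then show ?thesis using kj by (simp add: Phi_def p_def y_def algebra_simps)
    next
      case 2
      then show ?thesis by (simp add: Phi_km1 mxp a_def sg_def A_def)
    next
      case 3
      then show ?thesis by (simp add: Phi_k mnp b_def sg_def B_def)
    next
      case 4
      then show ?thesis using x0 kj by (simp add: Phi_def)
    qed
  qed
  have "nrm k x = 1" using x1 by (simp add: nrm_def)
  then have "Fm k p a b = x" using l by (simp add: Fm_def ph nrm_scale)
  then show ?thesis using vp by blast
qed

lemma cont_Max_gen:
  fixes g :: "nat \<Rightarrow> 'x \<Rightarrow> real"
  assumes "finite I" "I \<noteq> {}" "\<And>c. continuous_map X euclideanreal (g c)"
  shows "continuous_map X euclideanreal (\<lambda>x. Max ((\<lambda>c. g c x) ` I))"
    and "continuous_map X euclideanreal (\<lambda>x. Min ((\<lambda>c. g c x) ` I))"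
  using assms(1,2)
proof (induction I rule: finite_ne_induct)
  case (singleton c)
  { case 1 show ?case using assms(3) by simp }
  { case 2 show ?case using assms(3) by simp }
next
  case (insert c F)
  { case 1 show ?case using insert assms(3) by (simp add: continuous_map_real_max) }
  { case 2 show ?case using insert assms(3) by (simp add: continuous_map_real_min) }
qed

lemma Fm_cont:
  assumes c: "\<And>c. continuous_map X euclideanreal (\<lambda>x. f x c)"
    and v: "\<And>x. x \<in> topspace X \<Longrightarrow> valid k (f x)"
  shows "continuous_map X (nsphere k) (\<lambda>x. Fm k (f x) a b)"
proof -
  have cmx: "continuous_map X euclideanreal (\<lambda>x. mx k (f x))"
    unfolding mx_def using cont_Max_gen(1)[OF fin_ne, where g="\<lambda>c x. f x c"] c by simp
  have cmn: "continuous_map X euclideanreal (\<lambda>x. mn k (f x))"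
    unfolding mn_def using cont_Max_gen(2)[OF fin_ne, where g="\<lambda>c x. f x c"] c by simp
  have cphi: "continuous_map X euclideanreal (\<lambda>x. Phi k (f x) a b i)" for i
  proof -
    consider "i < j" | "i = j" | "i = k" | "\<not> i < j \<and> i \<noteq> j \<and> i \<noteq> k" by blast
    then show ?thesis
    proof cases
      case 1 then show ?thesis using kj by (simp add: Phi_def continuous_map_diff c)
    next
      case 2 then show ?thesis by (simp add: Phi_km1 continuous_intros cmx)
    next
      case 3 then show ?thesis by (simp add: Phi_k continuous_intros cmn)
    next
      case 4 then show ?thesis using kj by (simp add: Phi_def)
    qed
  qed
  have cn: "continuous_map X euclideanreal (\<lambda>x. nrm k (Phi k (f x) a b))"
    unfolding nrm_def by (intro continuous_intros cphi) auto
  have "continuous_map X (powertop_real UNIV) (\<lambda>x. Fm k (f x) a b)"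
    unfolding continuous_map_componentwise_UNIV Fm_def
    using Phi_nz[OF v] by (intro allI continuous_intros cphi cn) (metis less_irrefl)
  moreover have "(\<lambda>x. Fm k (f x) a b) \<in> topspace X \<rightarrow> {x. (\<Sum>i\<le>k. x i ^ 2) = 1 \<and> (\<forall>i>k. x i = 0)}"
    using Fm_sphere[OF v] by (auto simp: nsphere)
  ultimately show ?thesis by (simp add: nsphere continuous_map_in_subtopology)
qed

end



type_synonym mor = "nat set \<times> nat set \<times> bool \<times> bool"

definition EE :: "nat \<Rightarrow> mor set" where
  "EE k = {(p,q,a,b). p \<subseteq> q \<and> q \<subseteq> {..<k} \<and> (a \<longrightarrow> p = {}) \<and> (b \<longrightarrow> q = {..<k})}"

fun RR :: "nat \<Rightarrow> mor \<Rightarrow> mor" where "RR k (p,q,a,b) = (p,p,a, b \<and> p = {..<k})"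
fun SS :: "mor \<Rightarrow> mor" where "SS (p,q,a,b) = (q,q, a \<and> q = {}, b)"
fun CC :: "mor \<Rightarrow> mor \<Rightarrow> mor" where "CC (p,q,a,b) (p',q',a',b') = (p,q',a,b')"
fun DD0 :: "mor \<Rightarrow> nat \<Rightarrow> nat" where "DD0 (p,q,a,b) = (\<lambda>i. if i \<in> q - p then 1 else 0)"

definition Ms :: "(nat \<Rightarrow> nat) \<Rightarrow> nat set" where "Ms m = {i. m i \<noteq> 0}"

lemma finite_EE: "finite (EE k)"
proof -
  have "EE k \<subseteq> Pow {..<k} \<times> Pow {..<k} \<times> UNIV \<times> UNIV" by (auto simp: EE_def)
  moreover have "finite (Pow {..<k} \<times> Pow {..<k} \<times> (UNIV::bool set) \<times> (UNIV::bool set))" by simp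
  ultimately show ?thesis by (rule finite_subset)
qed

lemma DD0_eq_iff:
  "DD0 (p,q,a,b) = m \<longleftrightarrow> (\<forall>i. m i \<le> 1) \<and> Ms m = q - p"
proof
  assume "DD0 (p,q,a,b) = m"
  then show "(\<forall>i. m i \<le> 1) \<and> Ms m = q - p" by (auto simp: Ms_def split: if_splits)
next
  assume h: "(\<forall>i. m i \<le> 1) \<and> Ms m = q - p"
  show "DD0 (p,q,a,b) = m"
  proof
    fix i
    have "m i \<le> 1" using h by blast
    moreover have "i \<in> q - p \<longleftrightarrow> m i \<noteq> 0" using h by (auto simp: Ms_def)
    ultimately show "DD0 (p,q,a,b) i = m i" by auto
  qed
qed

lemma EE_mem: "(p,q,a,b) \<in> EE k \<longleftrightarrow> p \<subseteq> q \<and> q \<subseteq> {..<k} \<and> (a \<longrightarrow> p = {}) \<and> (b \<longrightarrow> q = {..<k})"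
  by (simp add: EE_def)

lemma EE_category: "is_category (EE k) (RR k) SS CC"
  unfolding is_category_def
proof (intro conjI ballI impI)
  fix x assume "x \<in> EE k"
  then obtain p q a b where x: "x = (p,q,a,b)" "p \<subseteq> q" "q \<subseteq> {..<k}" "a \<longrightarrow> p = {}" "b \<longrightarrow> q = {..<k}"
    by (cases x) (auto simp: EE_def)
  show "RR k x \<in> EE k" "SS x \<in> EE k" "RR k (RR k x) = RR k x" "SS (RR k x) = RR k x"
    "RR k (SS x) = SS x" "SS (SS x) = SS x" "CC (RR k x) x = x" "CC x (SS x) = x"
    using x by (auto simp: EE_def)
next
  fix x y assume "x \<in> EE k" "y \<in> EE k" "SS x = RR k y"
  then obtain p q a b p' q' a' b' where x: "x = (p,q,a,b)" "p \<subseteq> q" "q \<subseteq> {..<k}" "a \<longrightarrow> p = {}" "b \<longrightarrow> q = {..<k}"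
    and y: "y = (p',q',a',b')" "p' \<subseteq> q'" "q' \<subseteq> {..<k}" "a' \<longrightarrow> p' = {}" "b' \<longrightarrow> q' = {..<k}"
    by (cases x; cases y) (auto simp: EE_def)
  have e: "p' = q" "a' = (a \<and> q = {})" "b = (b' \<and> p' = {..<k})" using \<open>SS x = RR k y\<close> x y by auto
  show "CC x y \<in> EE k" using x y e by (auto simp: EE_def)
  show "RR k (CC x y) = RR k x" using x y e by auto
  show "SS (CC x y) = SS y" using x y e by auto
next
  fix x y z show "CC (CC x y) z = CC x (CC y z)" by (cases x; cases y; cases z) auto
qed

lemma sum_ind:
  assumes "(\<lambda>i. if i \<in> w - p then 1 else 0) = (\<lambda>i. m i + n i :: nat)"
  shows "\<forall>i. m i \<le> 1" "\<forall>i. n i \<le> 1" "Ms m \<inter> Ms n = {}" "Ms m \<union> Ms n = w - p"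
proof -
  have h: "(if i \<in> w - p then 1 else 0) = m i + n i" for i using fun_cong[OF assms, of i] by simp
  show "\<forall>i. m i \<le> 1" "\<forall>i. n i \<le> 1" using h by (metis le_add1 le_add2 le_zero_eq zero_le_one)+
  show "Ms m \<inter> Ms n = {}" unfolding Ms_def
  proof (rule equals0I)
    fix i assume "i \<in> {i. m i \<noteq> 0} \<inter> {i. n i \<noteq> 0}"
    with h[of i] show False by (auto split: if_splits)
  qed
  show "Ms m \<union> Ms n = w - p" unfolding Ms_def
  proof (intro equalityI subsetI)
    fix i assume "i \<in> {i. m i \<noteq> 0} \<union> {i. n i \<noteq> 0}"
    with h[of i] show "i \<in> w - p" by (cases "i \<in> w - p") auto
  next
    fix i assume "i \<in> w - p"
    with h[of i] show "i \<in> {i. m i \<noteq> 0} \<union> {i. n i \<noteq> 0}" by auto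
  qed
qed

lemma EE_UF:
  assumes m: "m \<in> Nk k" and n: "n \<in> Nk k" and l: "l \<in> EE k" and dl: "DD0 l = (\<lambda>i. m i + n i)"
  shows "\<exists>!(x, y). x \<in> EE k \<and> y \<in> EE k \<and> DD0 x = m \<and> DD0 y = n \<and> SS x = RR k y \<and> CC x y = l"
proof -
  obtain p w a b where lt: "l = (p,w,a,b)" by (cases l) auto
  have lE: "p \<subseteq> w" "w \<subseteq> {..<k}" "a \<longrightarrow> p = {}" "b \<longrightarrow> w = {..<k}" using l by (auto simp: lt EE_def)
  note si = sum_ind[OF dl[unfolded lt DD0.simps]]
  define q where "q = p \<union> Ms m"
  define x where "x = (p, q, a, b \<and> q = {..<k})"
  define y where "y = (q, w, a \<and> q = {}, b)"
  have qw: "p \<subseteq> q" "q \<subseteq> w" using si lE by (auto simp: q_def)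
  have qmp: "q - p = Ms m" using si(3,4) by (auto simp: q_def)
  have wmq: "w - q = Ms n" using si(3,4) qw by (auto simp: q_def)
  have "x \<in> EE k" "y \<in> EE k" "SS x = RR k y" "CC x y = l"
    using qw lE by (auto simp: x_def y_def EE_def lt)
  moreover have "DD0 x = m" unfolding x_def DD0_eq_iff using si qmp by simp
  moreover have "DD0 y = n" unfolding y_def DD0_eq_iff using si wmq by simp
  ultimately have ex: "x \<in> EE k \<and> y \<in> EE k \<and> DD0 x = m \<and> DD0 y = n \<and> SS x = RR k y \<and> CC x y = l"
    by blast
  show ?thesis
  proof (rule ex1I[of _ "(x,y)"])
    show "case (x, y) of (x, y) \<Rightarrow> x \<in> EE k \<and> y \<in> EE k \<and> DD0 x = m \<and> DD0 y = n \<and> SS x = RR k y \<and> CC x y = l"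
      using ex by simp
  next
    fix z assume "case z of (x, y) \<Rightarrow> x \<in> EE k \<and> y \<in> EE k \<and> DD0 x = m \<and> DD0 y = n \<and> SS x = RR k y \<and> CC x y = l"
    then obtain p1 q1 a1 b1 p2 q2 a2 b2 where z: "z = ((p1,q1,a1,b1),(p2,q2,a2,b2))"
      and h: "(p1,q1,a1,b1) \<in> EE k" "(p2,q2,a2,b2) \<in> EE k" "DD0 (p1,q1,a1,b1) = m" "DD0 (p2,q2,a2,b2) = n"
         "SS (p1,q1,a1,b1) = RR k (p2,q2,a2,b2)" "CC (p1,q1,a1,b1) (p2,q2,a2,b2) = l"
      by (cases z) force
    have e1: "p1 = p" "a1 = a" "q2 = w" "b2 = b" "p2 = q1" using h(5,6) by (auto simp: lt)
    have "q1 - p1 = Ms m" "q2 - p2 = Ms n" using h(3,4) DD0_eq_iff by blast+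
    moreover have "p1 \<subseteq> q1" using h(1) by (simp add: EE_def)
    ultimately have "q1 = q" using e1 by (auto simp: q_def)
    then show "z = (x, y)" using h(5) e1 h(1,2) by (auto simp: z x_def y_def EE_def)
  qed
qed

lemma EE_kgraph: "is_kgraph k (EE k) (RR k) SS CC DD0"
  unfolding is_kgraph_def
proof (intro conjI ballI impI)
  show "countable (EE k)" using finite_EE by (rule countable_finite)
  show "is_category (EE k) (RR k) SS CC" by (rule EE_category)
next
  fix x assume "x \<in> EE k"
  then show "DD0 x \<in> Nk k" "DD0 (RR k x) = (\<lambda>i. 0)"
    by (cases x; auto simp: EE_def Nk_def)+
next
  fix x y assume "x \<in> EE k" "y \<in> EE k" "SS x = RR k y"
  then show "DD0 (CC x y) = (\<lambda>i. DD0 x i + DD0 y i)"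
    by (cases x; cases y; auto simp: EE_def fun_eq_iff)
next
  fix m n l assume "m \<in> Nk k" "n \<in> Nk k" "l \<in> EE k" "DD0 l = (\<lambda>i. m i + n i)"
  then show "\<exists>!(x, y). x \<in> EE k \<and> y \<in> EE k \<and> DD0 x = m \<and> DD0 y = n \<and> SS x = RR k y \<and> CC x y = l"
    by (rule EE_UF)
qed



definition segX :: "nat \<Rightarrow> mor \<Rightarrow> (nat \<Rightarrow> nat) \<Rightarrow> (nat \<Rightarrow> nat) \<Rightarrow> mor" where
  "segX k x m n = (case x of (p,q,a,b) \<Rightarrow>
     (p \<union> Ms m, p \<union> Ms n, a \<and> p \<union> Ms m = {}, b \<and> p \<union> Ms n = {..<k}))"

definition segP :: "nat \<Rightarrow> mor \<Rightarrow> (nat \<Rightarrow> nat) \<Rightarrow> (nat \<Rightarrow> nat) \<Rightarrow> mor \<Rightarrow> bool" where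
  "segP k x m n b \<longleftrightarrow> b \<in> EE k \<and> DD0 b = (\<lambda>i. n i - m i) \<and>
      (\<exists>a\<in>EE k. \<exists>c\<in>EE k. DD0 a = m \<and> SS a = RR k b \<and> SS b = RR k c \<and> CC (CC a b) c = x)"

lemma seg_abs:
  assumes x: "x \<in> EE k" and mn: "\<And>i. m i \<le> n i" and nd: "\<And>i. n i \<le> DD0 x i"
  shows "segP k x m n (segX k x m n) \<and> (\<forall>b. segP k x m n b \<longrightarrow> b = segX k x m n)"
proof -
  obtain p q a b where xt: "x = (p,q,a,b)" by (cases x) auto
  have xE: "p \<subseteq> q" "q \<subseteq> {..<k}" "a \<longrightarrow> p = {}" "b \<longrightarrow> q = {..<k}" using x by (auto simp: xt EE_def)
  have d1: "DD0 x i \<le> 1" for i by (simp add: xt)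
  have m1: "m i \<le> 1" "n i \<le> 1" for i using mn[of i] nd[of i] d1[of i] by linarith+
  have MN1: "Ms m \<subseteq> Ms n"
  proof
    fix i assume "i \<in> Ms m" then show "i \<in> Ms n" using mn[of i] by (simp add: Ms_def)
  qed
  have MN2: "Ms n \<subseteq> q - p"
  proof
    fix i assume "i \<in> Ms n" then have "DD0 x i \<noteq> 0" using nd[of i] by (simp add: Ms_def)
    then show "i \<in> q - p" by (simp add: xt split: if_splits)
  qed
  note MN = MN1 MN2
  define u where "u = p \<union> Ms m"
  define v where "v = p \<union> Ms n"
  have uv: "p \<subseteq> u" "u \<subseteq> v" "v \<subseteq> q" "u - p = Ms m" "v - u = Ms n - Ms m" "q - v = q - p - Ms n"
    using MN xE by (auto simp: u_def v_def)
  have segt: "segX k x m n = (u, v, a \<and> u = {}, b \<and> v = {..<k})" by (simp add: segX_def xt u_def v_def)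
  have Msd: "Ms (\<lambda>i. n i - m i) = Ms n - Ms m"
  proof -
    have "n i - m i \<noteq> 0 \<longleftrightarrow> n i \<noteq> 0 \<and> m i = 0" for i using mn[of i] m1[of i] by linarith
    then show ?thesis by (auto simp: Ms_def)
  qed
  have m1d: "n i - m i \<le> 1" for i using m1[of i] by simp
  show ?thesis
    unfolding segP_def
  proof (intro conjI[OF _ allI[OF impI]])
    define al where "al = (p, u, a, b \<and> u = {..<k})"
    define ga where "ga = (v, q, a \<and> v = {}, b)"
    have "al \<in> EE k" "ga \<in> EE k" "segX k x m n \<in> EE k" using uv xE by (auto simp: al_def ga_def segt EE_def)
    moreover have "DD0 (segX k x m n) = (\<lambda>i. n i - m i)"
      unfolding segt DD0_eq_iff using m1d Msd uv by simp
    moreover have "DD0 al = m" unfolding al_def DD0_eq_iff using m1 uv by simp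
    moreover have "SS al = RR k (segX k x m n)" "SS (segX k x m n) = RR k ga"
      using uv xE by (auto simp: al_def ga_def segt)
    moreover have "CC (CC al (segX k x m n)) ga = x" unfolding segt by (simp add: al_def ga_def xt)
    ultimately show "segX k x m n \<in> EE k \<and> DD0 (segX k x m n) = (\<lambda>i. n i - m i) \<and>
      (\<exists>a\<in>EE k. \<exists>c\<in>EE k. DD0 a = m \<and> SS a = RR k (segX k x m n) \<and> SS (segX k x m n) = RR k c \<and> CC (CC a (segX k x m n)) c = x)" by blast
  next
    fix be assume P: "be \<in> EE k \<and> DD0 be = (\<lambda>i. n i - m i) \<and>
      (\<exists>a\<in>EE k. \<exists>c\<in>EE k. DD0 a = m \<and> SS a = RR k be \<and> SS be = RR k c \<and> CC (CC a be) c = x)"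
    then obtain al ga where h: "be \<in> EE k" "DD0 be = (\<lambda>i. n i - m i)" "al \<in> EE k" "ga \<in> EE k" "DD0 al = m"
      "SS al = RR k be" "SS be = RR k ga" "CC (CC al be) ga = x" by blast
    obtain p1 q1 a1 b1 where al: "al = (p1,q1,a1,b1)" by (cases al) auto
    obtain p2 q2 a2 b2 where be: "be = (p2,q2,a2,b2)" by (cases be) auto
    obtain p3 q3 a3 b3 where ga: "ga = (p3,q3,a3,b3)" by (cases ga) auto
    have e: "p1 = p" "a1 = a" "q3 = q" "b3 = b" using h(8) by (auto simp: al be ga xt)
    have s1: "p2 = q1" "a2 = (a1 \<and> q1 = {})" "b1 = (b2 \<and> p2 = {..<k})" using h(6) by (auto simp: al be)
    have s2: "p3 = q2" "a3 = (a2 \<and> q2 = {})" "b2 = (b3 \<and> p3 = {..<k})" using h(7) by (auto simp: be ga)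
    have "DD0 (p1,q1,a1,b1) = m" using h(5) al by simp
    then have "q1 - p1 = Ms m" unfolding DD0_eq_iff by blast
    moreover have "p1 \<subseteq> q1" using h(3) by (simp add: al EE_def)
    ultimately have "q1 = u" using e by (auto simp: u_def)
    have "DD0 (p2,q2,a2,b2) = (\<lambda>i. n i - m i)" using h(2) be by simp
    then have "q2 - p2 = Ms n - Ms m" unfolding DD0_eq_iff Msd by blast
    moreover have "p2 \<subseteq> q2" using h(1) by (simp add: be EE_def)
    ultimately have "q2 = v" using \<open>q1 = u\<close> s1 uv MN unfolding u_def v_def by blast
    show "be = segX k x m n"
      using \<open>q1 = u\<close> \<open>q2 = v\<close> e s1 s2 by (simp add: be segt)
  qed
qed



lemma kgraph_transfer:
  assumes kg: "is_kgraph k E R S C D" and gf: "\<And>x. x \<in> E \<Longrightarrow> g (f x) = x"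
  shows "is_kgraph k (f ` E) (\<lambda>u. f (R (g u))) (\<lambda>u. f (S (g u))) (\<lambda>u v. f (C (g u) (g v))) (\<lambda>u. D (g u))"
proof -
  have inj: "f x = f y \<longleftrightarrow> x = y" if "x \<in> E" "y \<in> E" for x y using gf that by metis
  from kg have cE: "countable E" and cat: "is_category E R S C"
    and dd: "\<forall>x\<in>E. D x \<in> Nk k \<and> D (R x) = (\<lambda>i. 0)"
    and dc: "\<forall>x\<in>E. \<forall>y\<in>E. S x = R y \<longrightarrow> D (C x y) = (\<lambda>i. D x i + D y i)"
    and uf: "\<forall>m\<in>Nk k. \<forall>n\<in>Nk k. \<forall>l\<in>E. D l = (\<lambda>i. m i + n i) \<longrightarrow>
        (\<exists>!(x, y). x \<in> E \<and> y \<in> E \<and> D x = m \<and> D y = n \<and> S x = R y \<and> C x y = l)"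
    unfolding is_kgraph_def by blast+
  from cat have c1: "\<forall>x\<in>E. R x \<in> E \<and> S x \<in> E \<and>
        R (R x) = R x \<and> S (R x) = R x \<and> R (S x) = S x \<and> S (S x) = S x \<and>
        C (R x) x = x \<and> C x (S x) = x"
    and c2: "\<forall>x\<in>E. \<forall>y\<in>E. S x = R y \<longrightarrow> C x y \<in> E \<and> R (C x y) = R x \<and> S (C x y) = S y"
    and c3: "\<forall>x\<in>E. \<forall>y\<in>E. \<forall>z\<in>E. S x = R y \<and> S y = R z \<longrightarrow> C (C x y) z = C x (C y z)"
    unfolding is_category_def by blast+
  show ?thesis
    unfolding is_kgraph_def is_category_def
  proof (intro conjI)
    show "countable (f ` E)" using cE by simp
    show "\<forall>x\<in>f ` E. f (R (g x)) \<in> f ` E \<and> f (S (g x)) \<in> f ` E \<and>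
        f (R (g (f (R (g x))))) = f (R (g x)) \<and> f (S (g (f (R (g x))))) = f (R (g x)) \<and>
        f (R (g (f (S (g x))))) = f (S (g x)) \<and> f (S (g (f (S (g x))))) = f (S (g x)) \<and>
        f (C (g (f (R (g x)))) (g x)) = x \<and> f (C (g x) (g (f (S (g x))))) = x"
    proof
      fix u assume "u \<in> f ` E"
      then obtain x where x: "x \<in> E" "u = f x" by auto
      have h: "R x \<in> E" "S x \<in> E" "g (f (R x)) = R x" "g (f (S x)) = S x" "g u = x"
        "R (R x) = R x" "S (R x) = R x" "R (S x) = S x" "S (S x) = S x" "C (R x) x = x" "C x (S x) = x"
        using c1 x gf by auto
      show "f (R (g u)) \<in> f ` E \<and> f (S (g u)) \<in> f ` E \<and>
        f (R (g (f (R (g u))))) = f (R (g u)) \<and> f (S (g (f (R (g u))))) = f (R (g u)) \<and>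
        f (R (g (f (S (g u))))) = f (S (g u)) \<and> f (S (g (f (S (g u))))) = f (S (g u)) \<and>
        f (C (g (f (R (g u)))) (g u)) = u \<and> f (C (g u) (g (f (S (g u))))) = u"
        using h x by simp
    qed
    show "\<forall>x\<in>f ` E. \<forall>y\<in>f ` E. f (S (g x)) = f (R (g y)) \<longrightarrow>
        f (C (g x) (g y)) \<in> f ` E \<and> f (R (g (f (C (g x) (g y))))) = f (R (g x)) \<and>
        f (S (g (f (C (g x) (g y))))) = f (S (g y))"
    proof (intro ballI impI)
      fix u v assume "u \<in> f ` E" "v \<in> f ` E" and e: "f (S (g u)) = f (R (g v))"
      then obtain x y where xy: "x \<in> E" "y \<in> E" "u = f x" "v = f y" by auto
      then have "S x = R y" using e inj c1 gf by auto
      then show "f (C (g u) (g v)) \<in> f ` E \<and> f (R (g (f (C (g u) (g v))))) = f (R (g u)) \<and>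
        f (S (g (f (C (g u) (g v))))) = f (S (g v))" using xy c2 gf by auto
    qed
    show "\<forall>x\<in>f ` E. \<forall>y\<in>f ` E. \<forall>z\<in>f ` E. f (S (g x)) = f (R (g y)) \<and> f (S (g y)) = f (R (g z)) \<longrightarrow>
        f (C (g (f (C (g x) (g y)))) (g z)) = f (C (g x) (g (f (C (g y) (g z)))))"
    proof (intro ballI impI)
      fix u v w assume "u \<in> f ` E" "v \<in> f ` E" "w \<in> f ` E"
        and e: "f (S (g u)) = f (R (g v)) \<and> f (S (g v)) = f (R (g w))"
      then obtain x y z where xy: "x \<in> E" "y \<in> E" "z \<in> E" "u = f x" "v = f y" "w = f z" by auto
      then have "S x = R y" "S y = R z" using e inj c1 gf by auto
      then show "f (C (g (f (C (g u) (g v)))) (g w)) = f (C (g u) (g (f (C (g v) (g w)))))"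
        using xy c2 c3 gf by auto
    qed
    show "\<forall>x\<in>f ` E. D (g x) \<in> Nk k \<and> D (g (f (R (g x)))) = (\<lambda>i. 0)"
      using dd c1 gf by auto
    show "\<forall>x\<in>f ` E. \<forall>y\<in>f ` E. f (S (g x)) = f (R (g y)) \<longrightarrow>
        D (g (f (C (g x) (g y)))) = (\<lambda>i. D (g x) i + D (g y) i)"
    proof (intro ballI impI)
      fix u v assume "u \<in> f ` E" "v \<in> f ` E" and e: "f (S (g u)) = f (R (g v))"
      then obtain x y where xy: "x \<in> E" "y \<in> E" "u = f x" "v = f y" by auto
      then have "S x = R y" using e inj c1 gf by auto
      then show "D (g (f (C (g u) (g v)))) = (\<lambda>i. D (g u) i + D (g v) i)" using xy c2 dc gf by auto
    qed
    show "\<forall>m\<in>Nk k. \<forall>n\<in>Nk k. \<forall>l\<in>f ` E. D (g l) = (\<lambda>i. m i + n i) \<longrightarrow>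
        (\<exists>!(x, y). x \<in> f ` E \<and> y \<in> f ` E \<and> D (g x) = m \<and> D (g y) = n \<and>
           f (S (g x)) = f (R (g y)) \<and> f (C (g x) (g y)) = l)"
    proof (intro ballI impI)
      fix m n u assume m: "m \<in> Nk k" and n: "n \<in> Nk k" and u: "u \<in> f ` E" and du: "D (g u) = (\<lambda>i. m i + n i)"
      then obtain l where l: "l \<in> E" "u = f l" by auto
      then have "D l = (\<lambda>i. m i + n i)" using du gf by simp
      with uf m n l have ex1: "\<exists>!(x, y). x \<in> E \<and> y \<in> E \<and> D x = m \<and> D y = n \<and> S x = R y \<and> C x y = l"
        by blast
      then obtain xy where xy1: "case xy of (x, y) \<Rightarrow> x \<in> E \<and> y \<in> E \<and> D x = m \<and> D y = n \<and> S x = R y \<and> C x y = l"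
        and xy2: "\<And>z. (case z of (x, y) \<Rightarrow> x \<in> E \<and> y \<in> E \<and> D x = m \<and> D y = n \<and> S x = R y \<and> C x y = l) \<Longrightarrow> z = xy"
        by (rule ex1E) blast
      obtain x y where xyd: "xy = (x,y)" by (cases xy)
      have P: "x \<in> E" "y \<in> E" "D x = m" "D y = n" "S x = R y" "C x y = l" using xy1 xyd by auto
      have U: "x' = x \<and> y' = y" if "x' \<in> E" "y' \<in> E" "D x' = m" "D y' = n" "S x' = R y'" "C x' y' = l" for x' y'
        using xy2[of "(x',y')"] that xyd by auto
      show "\<exists>!(x, y). x \<in> f ` E \<and> y \<in> f ` E \<and> D (g x) = m \<and> D (g y) = n \<and>
           f (S (g x)) = f (R (g y)) \<and> f (C (g x) (g y)) = u"
      proof (rule ex1I[of _ "(f x, f y)"])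
        show "case (f x, f y) of (x, y) \<Rightarrow> x \<in> f ` E \<and> y \<in> f ` E \<and> D (g x) = m \<and> D (g y) = n \<and>
           f (S (g x)) = f (R (g y)) \<and> f (C (g x) (g y)) = u"
          using P gf l by auto
      next
        fix z assume "case z of (x, y) \<Rightarrow> x \<in> f ` E \<and> y \<in> f ` E \<and> D (g x) = m \<and> D (g y) = n \<and>
           f (S (g x)) = f (R (g y)) \<and> f (C (g x) (g y)) = u"
        then obtain x' y' where z: "z = (f x', f y')" "x' \<in> E" "y' \<in> E" "D x' = m" "D y' = n"
          "f (S x') = f (R y')" "f (C x' y') = f l"
          using gf l by (cases z) force
        then have "S x' = R y'" using inj c1 by auto
        moreover have "C x' y' = l" using z(7) inj c2 l z(2,3) calculation by auto
        ultimately have "x' = x \<and> y' = y" using U z by blast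
        then show "z = (f x, f y)" using z by simp
      qed
    qed
  qed
qed



definition enc :: "nat \<Rightarrow> mor \<Rightarrow> nat" where "enc k = to_nat_on (EE k)"
definition dec :: "nat \<Rightarrow> nat \<Rightarrow> mor" where "dec k = from_nat_into (EE k)"
definition LL :: "nat \<Rightarrow> nat set" where "LL k = enc k ` EE k"
definition rN where "rN k u = enc k (RR k (dec k u))"
definition sN where "sN k u = enc k (SS (dec k u))"
definition cN where "cN k u v = enc k (CC (dec k u) (dec k v))"
definition dN where "dN k u = DD0 (dec k u)"

lemma dec_enc[simp]: "x \<in> EE k \<Longrightarrow> dec k (enc k x) = x"
  unfolding dec_def enc_def using finite_EE countable_finite by (blast intro: from_nat_into_to_nat_on)

lemma enc_inj: "x \<in> EE k \<Longrightarrow> y \<in> EE k \<Longrightarrow> enc k x = enc k y \<longleftrightarrow> x = y"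
  by (metis dec_enc)

lemma LL_kgraph: "is_kgraph k (LL k) (rN k) (sN k) (cN k) (dN k)"
  unfolding LL_def rN_def sN_def cN_def dN_def
  by (rule kgraph_transfer[OF EE_kgraph[of k], of "dec k" "enc k"]) simp

lemma finite_LL: "finite (LL k)" by (simp add: LL_def finite_EE)

lemma EE_closed:
  assumes "x \<in> EE k" shows "RR k x \<in> EE k" "SS x \<in> EE k"
  using assms by (cases x; auto simp: EE_def)+

lemma CC_EE: "x \<in> EE k \<Longrightarrow> y \<in> EE k \<Longrightarrow> SS x = RR k y \<Longrightarrow> CC x y \<in> EE k"
  using EE_category unfolding is_category_def by blast

lemma segment_nat:
  assumes x: "x \<in> EE k" and mn: "\<And>i. m i \<le> n i" and nd: "\<And>i. n i \<le> DD0 x i"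
  shows "segment (LL k) (rN k) (sN k) (cN k) (dN k) (enc k x) m n = enc k (segX k x m n)"
    and "segX k x m n \<in> EE k"
proof -
  note sa = seg_abs[OF x mn nd]
  from sa have P: "segP k x m n (segX k x m n)" by blast
  then show "segX k x m n \<in> EE k" by (simp add: segP_def)
  show "segment (LL k) (rN k) (sN k) (cN k) (dN k) (enc k x) m n = enc k (segX k x m n)"
    unfolding segment_def
  proof (rule the_equality)
    from P obtain a c where h: "segX k x m n \<in> EE k" "DD0 (segX k x m n) = (\<lambda>i. n i - m i)"
      "a \<in> EE k" "c \<in> EE k" "DD0 a = m" "SS a = RR k (segX k x m n)" "SS (segX k x m n) = RR k c"
      "CC (CC a (segX k x m n)) c = x" unfolding segP_def by blast
    have "CC a (segX k x m n) \<in> EE k" using CC_EE h by blast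
    then show "enc k (segX k x m n) \<in> LL k \<and> dN k (enc k (segX k x m n)) = (\<lambda>i. n i - m i) \<and>
      (\<exists>a\<in>LL k. \<exists>c\<in>LL k. dN k a = m \<and> sN k a = rN k (enc k (segX k x m n)) \<and>
        sN k (enc k (segX k x m n)) = rN k c \<and> cN k (cN k a (enc k (segX k x m n))) c = enc k x)"
    proof (intro conjI)
      show "enc k (segX k x m n) \<in> LL k" using h by (simp add: LL_def)
      show "dN k (enc k (segX k x m n)) = (\<lambda>i. n i - m i)" using h by (simp add: dN_def)
      show "\<exists>a\<in>LL k. \<exists>c\<in>LL k. dN k a = m \<and> sN k a = rN k (enc k (segX k x m n)) \<and>
        sN k (enc k (segX k x m n)) = rN k c \<and> cN k (cN k a (enc k (segX k x m n))) c = enc k x"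
      proof -
        have 1: "enc k a \<in> LL k" "enc k c \<in> LL k" using h by (auto simp: LL_def)
        have 2: "dN k (enc k a) = m" using h by (simp add: dN_def)
        have 3: "sN k (enc k a) = rN k (enc k (segX k x m n))" using h by (simp add: sN_def rN_def)
        have 4: "sN k (enc k (segX k x m n)) = rN k (enc k c)" using h by (simp add: sN_def rN_def)
        have 5: "cN k (cN k (enc k a) (enc k (segX k x m n))) (enc k c) = enc k x"
          using h \<open>CC a (segX k x m n) \<in> EE k\<close> by (simp add: cN_def)
        show ?thesis using 1 2 3 4 5 by blast
      qed
    qed
  next
    fix bb assume "bb \<in> LL k \<and> dN k bb = (\<lambda>i. n i - m i) \<and>
      (\<exists>a\<in>LL k. \<exists>c\<in>LL k. dN k a = m \<and> sN k a = rN k bb \<and> sN k bb = rN k c \<and> cN k (cN k a bb) c = enc k x)"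
    then obtain b a c where h: "b \<in> EE k" "a \<in> EE k" "c \<in> EE k" "bb = enc k b" "DD0 b = (\<lambda>i. n i - m i)"
      "DD0 a = m" "enc k (SS a) = enc k (RR k b)" "enc k (SS b) = enc k (RR k c)"
      "enc k (CC (dec k (enc k (CC a b))) c) = enc k x"
      by (auto simp: LL_def dN_def sN_def rN_def cN_def)
    have e1: "SS a = RR k b" "SS b = RR k c" using h enc_inj EE_closed by metis+
    have "CC a b \<in> EE k" using CC_EE h(1,2) e1 by blast
    moreover have "SS (CC a b) = SS b"
    proof -
      obtain p1 q1 a1 b1 where at: "a = (p1,q1,a1,b1)" by (cases a)
      obtain p2 q2 a2 b2 where bt: "b = (p2,q2,a2,b2)" by (cases b)
      have "p2 = q1" "a2 = (a1 \<and> q1 = {})" using e1(1) by (auto simp: at bt)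
      moreover have "p2 \<subseteq> q2" using h(1) by (simp add: bt EE_def)
      ultimately show ?thesis by (auto simp: at bt)
    qed
    then have "SS (CC a b) = RR k c" using e1 by simp
    ultimately have "CC (CC a b) c \<in> EE k" using CC_EE h(3) by blast
    then have "CC (CC a b) c = x" using h(9) enc_inj x \<open>CC a b \<in> EE k\<close> by auto
    then have "segP k x m n b" unfolding segP_def using h e1 by blast
    then show "bb = enc k (segX k x m n)" using sa h(4) by blast
  qed
qed



definition posf :: "mor \<Rightarrow> (nat \<Rightarrow> real) \<Rightarrow> nat \<Rightarrow> real" where
  "posf x t = (\<lambda>i. if i \<in> fst x then 1 else t i)"
definition la :: "mor \<Rightarrow> bool" where "la x = fst (snd (snd x))"
definition lb :: "mor \<Rightarrow> bool" where "lb x = snd (snd (snd x))"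
definition Pset :: "(nat \<Rightarrow> real) \<Rightarrow> nat set" where "Pset P = {i. P i = 1}"
definition Qset :: "(nat \<Rightarrow> real) \<Rightarrow> nat set" where "Qset P = {i. 0 < P i}"
definition frc :: "(nat \<Rightarrow> real) \<Rightarrow> nat \<Rightarrow> real" where "frc t = (\<lambda>i. t i - of_int \<lfloor>t i\<rfloor>)"

lemma cube_pt:
  assumes x: "(p,q,a,b) \<in> EE k" and t: "t \<in> cube k (DD0 (p,q,a,b))"
  shows "i \<in> q - p \<Longrightarrow> 0 \<le> t i \<and> t i \<le> 1" "i \<notin> q - p \<Longrightarrow> t i = 0"
proof -
  have q: "q \<subseteq> {..<k}" using x by (simp add: EE_def)
  show "i \<in> q - p \<Longrightarrow> 0 \<le> t i \<and> t i \<le> 1" using t q by (auto simp: cube_def)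
  show "i \<notin> q - p \<Longrightarrow> t i = 0"
  proof (cases "i < k")
    case True
    assume "i \<notin> q - p"
    from True t have "0 \<le> t i" "t i \<le> real (DD0 (p,q,a,b) i)" by (auto simp: cube_def)
    with \<open>i \<notin> q - p\<close> show ?thesis by (auto split: if_splits)
  next
    case False
    with t show ?thesis by (simp add: cube_def)
  qed
qed

lemma flr01: "0 \<le> (s::real) \<Longrightarrow> s \<le> 1 \<Longrightarrow> nat \<lfloor>s\<rfloor> = (if s = 1 then 1 else 0)"
proof -
  assume "0 \<le> s" "s \<le> 1"
  then show ?thesis
    by (cases "s = 1") (auto intro!: floor_eq_iff[THEN iffD2])
qed

lemma ceil01: "0 \<le> (s::real) \<Longrightarrow> s \<le> 1 \<Longrightarrow> nat \<lceil>s\<rceil> = (if s = 0 then 0 else 1)"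
proof -
  assume "0 \<le> s" "s \<le> 1"
  moreover have "s \<noteq> 0 \<Longrightarrow> \<lceil>s\<rceil> = 1" using \<open>0 \<le> s\<close> \<open>s \<le> 1\<close> by (simp add: ceiling_eq_iff)
  ultimately show ?thesis by auto
qed

lemma frc01: "0 \<le> (s::real) \<Longrightarrow> s \<le> 1 \<Longrightarrow> s - of_int \<lfloor>s\<rfloor> = (if s = 1 then 0 else s)"
proof -
  assume "0 \<le> s" "s \<le> 1"
  then have "\<lfloor>s\<rfloor> = (if s = 1 then 1 else 0)" by (cases "s = 1") (auto intro!: floor_eq_iff[THEN iffD2])
  then show ?thesis by auto
qed

context
  fixes k :: nat and x t
  assumes x: "x \<in> EE k" and t: "t \<in> cube k (DD0 x)"
begin

lemma tpt: obtains p q a b where "x = (p,q,a,b)" "p \<subseteq> q" "q \<subseteq> {..<k}" "a \<longrightarrow> p = {}" "b \<longrightarrow> q = {..<k}"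
    "\<And>i. i \<in> q - p \<Longrightarrow> 0 \<le> t i \<and> t i \<le> 1" "\<And>i. i \<notin> q - p \<Longrightarrow> t i = 0"
proof -
  obtain p q a b where xt: "x = (p,q,a,b)" by (cases x)
  show ?thesis
    apply (rule that[OF xt])
    using x t cube_pt[of p q a b k t] by (auto simp: xt EE_def)
qed

lemma t01: "0 \<le> t i" "t i \<le> 1"
  by (rule tpt; metis order_refl zero_le_one)+

lemma valid_posf: "valid k (posf x t)"
proof (rule tpt)
  fix p q a b assume h: "x = (p,q,a,b)" "p \<subseteq> q" "q \<subseteq> {..<k}"
    "\<And>i. i \<in> q - p \<Longrightarrow> 0 \<le> t i \<and> t i \<le> 1" "\<And>i. i \<notin> q - p \<Longrightarrow> t i = 0"
  show "valid k (posf x t)"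
    unfolding valid_def posf_def
  proof (intro conjI allI impI)
    fix c assume "c < k" then show "0 \<le> (if c \<in> fst x then 1 else t c)" "(if c \<in> fst x then 1 else t c) \<le> 1"
      using t01 by auto
  next
    fix c assume "k \<le> c"
    then have "c \<notin> q" "c \<notin> p" using h(2,3) by auto
    then show "(if c \<in> fst x then 1 else t c) = 0" using h(1) h(5)[of c] by simp
  qed
qed

lemma flr_t: "flr t = (\<lambda>i. if t i = 1 then 1 else 0)"
  using t01 by (auto simp: flr_def flr01)

lemma ceil_t: "ceil t = (\<lambda>i. if t i = 0 then 0 else 1)"
  using t01 by (auto simp: ceil_def ceil01)

lemma flr_ceil: "\<And>i. flr t i \<le> ceil t i" "\<And>i. ceil t i \<le> DD0 x i"
proof -
  fix i show "flr t i \<le> ceil t i" by (simp add: flr_t ceil_t)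
  show "ceil t i \<le> DD0 x i"
  proof (rule tpt)
    fix p q a b assume h: "x = (p,q,a,b)" "\<And>i. i \<notin> q - p \<Longrightarrow> t i = 0"
    show "ceil t i \<le> DD0 x i" using h by (cases "i \<in> q - p") (auto simp: ceil_t)
  qed
qed

lemma segX_t: "segX k x (flr t) (ceil t) =
   (Pset (posf x t), Qset (posf x t), la x \<and> Pset (posf x t) = {}, lb x \<and> Qset (posf x t) = {..<k})"
proof (rule tpt)
  fix p q a b assume h: "x = (p,q,a,b)" "p \<subseteq> q"
    "\<And>i. i \<in> q - p \<Longrightarrow> 0 \<le> t i \<and> t i \<le> 1" "\<And>i. i \<notin> q - p \<Longrightarrow> t i = 0"
  have 1: "p \<union> Ms (flr t) = Pset (posf x t)"
  proof -
    have "i \<in> p \<union> Ms (flr t) \<longleftrightarrow> i \<in> Pset (posf x t)" for i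
      using h(4)[of i] by (cases "i \<in> p") (auto simp: Ms_def flr_t Pset_def posf_def h(1))
    then show ?thesis by blast
  qed
  have 2: "p \<union> Ms (ceil t) = Qset (posf x t)"
  proof -
    have "i \<in> p \<union> Ms (ceil t) \<longleftrightarrow> i \<in> Qset (posf x t)" for i
      using h(4)[of i] t01[of i] by (cases "i \<in> p") (auto simp: Ms_def ceil_t Qset_def posf_def h(1))
    then show ?thesis by blast
  qed
  show ?thesis unfolding 1[symmetric] 2[symmetric] by (simp add: segX_def h(1) la_def lb_def)
qed

lemma frc_t: "frc t = frc (posf x t)"
proof (rule tpt)
  fix p q a b assume h: "x = (p,q,a,b)" "\<And>i. i \<notin> q - p \<Longrightarrow> t i = 0"
  show ?thesis
  proof
    fix i
    show "frc t i = frc (posf x t) i"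
      using h(2)[of i] by (cases "i \<in> p") (auto simp: frc_def posf_def h(1))
  qed
qed

end

lemma valid_eq_iff:
  assumes "valid k P" "valid k P'"
  shows "P = P' \<longleftrightarrow> Pset P = Pset P' \<and> frc P = frc P'"
proof
  assume h: "Pset P = Pset P' \<and> frc P = frc P'"
  show "P = P'"
  proof
    fix i
    have a: "0 \<le> P i" "P i \<le> 1" "0 \<le> P' i" "P' i \<le> 1" using assms by (cases "i < k"; auto simp: valid_def)+
    have "(P i = 1) = (P' i = 1)" using h by (auto simp: Pset_def)
    moreover have "P i - of_int \<lfloor>P i\<rfloor> = P' i - of_int \<lfloor>P' i\<rfloor>" using h unfolding frc_def by meson
    ultimately show "P i = P' i" using a frc01[of "P i"] frc01[of "P' i"] by (cases "P i = 1") auto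
  qed
qed simp

lemma mx_iff: "k \<ge> 1 \<Longrightarrow> valid k P \<Longrightarrow> mx k P = 1 \<longleftrightarrow> Pset P \<noteq> {}"
proof -
  assume k: "k \<ge> 1" and v: "valid k P"
  have "0 \<in> {..<k}" using k by simp
  then have ne: "{..<k} \<noteq> {}" by blast
  have "mx k P = 1 \<longleftrightarrow> (\<exists>i<k. P i = 1)"
  proof
    assume "mx k P = 1"
    moreover have "mx k P \<in> P ` {..<k}" unfolding mx_def using ne by (intro Max_in) auto
    ultimately show "\<exists>i<k. P i = 1" by auto
  next
    assume "\<exists>i<k. P i = 1"
    then obtain i where "i < k" "P i = 1" by blast
    then have "1 \<le> mx k P" unfolding mx_def by (metis Max_ge finite_imageI finite_lessThan image_eqI lessThan_iff)
    moreover have "mx k P \<le> 1" using v ne by (auto simp: mx_def valid_def)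
    ultimately show "mx k P = 1" by simp
  qed
  also have "\<dots> \<longleftrightarrow> Pset P \<noteq> {}"
  proof
    assume "\<exists>i<k. P i = 1" then show "Pset P \<noteq> {}" by (auto simp: Pset_def)
  next
    assume "Pset P \<noteq> {}"
    then obtain i where i: "P i = 1" by (auto simp: Pset_def)
    have "i < k"
    proof (rule ccontr)
      assume "\<not> i < k" then have "P i = 0" using v by (simp add: valid_def)
      with i show False by simp
    qed
    with i show "\<exists>i<k. P i = 1" by blast
  qed
  finally show ?thesis .
qed

lemma mn_iff: "k \<ge> 1 \<Longrightarrow> valid k P \<Longrightarrow> mn k P = 0 \<longleftrightarrow> Qset P \<noteq> {..<k}"
proof -
  assume k: "k \<ge> 1" and v: "valid k P"
  have "0 \<in> {..<k}" using k by simp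
  then have ne: "{..<k} \<noteq> {}" by blast
  have "mn k P = 0 \<longleftrightarrow> (\<exists>i<k. P i = 0)"
  proof
    assume "mn k P = 0"
    moreover have "mn k P \<in> P ` {..<k}" unfolding mn_def using ne by (intro Min_in) auto
    ultimately show "\<exists>i<k. P i = 0" by auto
  next
    assume "\<exists>i<k. P i = 0"
    then obtain i where "i < k" "P i = 0" by blast
    then have "Min (P ` {..<k}) \<le> P i" by (intro Min_le) auto
    then have "mn k P \<le> 0" using \<open>P i = 0\<close> by (simp add: mn_def)
    moreover have "0 \<le> mn k P" using v ne by (auto simp: mn_def valid_def)
    ultimately show "mn k P = 0" by simp
  qed
  also have "\<dots> \<longleftrightarrow> Qset P \<noteq> {..<k}"
  proof
    assume "\<exists>i<k. P i = 0"
    then obtain i where "i < k" "P i = 0" by blast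
    then have "i \<in> {..<k}" "i \<notin> Qset P" by (auto simp: Qset_def)
    then show "Qset P \<noteq> {..<k}" by blast
  next
    assume "Qset P \<noteq> {..<k}"
    moreover have "Qset P \<subseteq> {..<k}"
    proof
      fix i assume "i \<in> Qset P"
      then have "0 < P i" by (simp add: Qset_def)
      show "i \<in> {..<k}"
      proof (rule ccontr)
        assume "i \<notin> {..<k}" then have "P i = 0" using v by (simp add: valid_def)
        with \<open>0 < P i\<close> show False by simp
      qed
    qed
    ultimately have "\<exists>i. i \<in> {..<k} \<and> i \<notin> Qset P" by blast
    then obtain i where "i < k" "\<not> 0 < P i" by (auto simp: Qset_def)
    moreover have "0 \<le> P i" using v \<open>i < k\<close> unfolding valid_def by blast
    ultimately have "P i = 0" by linarith
    then show "\<exists>i<k. P i = 0" using \<open>i < k\<close> by blast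
  qed
  finally show ?thesis .
qed



lemma cube_PiE: "cube k m = PiE UNIV (\<lambda>i. if i < k then {0..real (m i)} else {0})"
proof (intro equalityI subsetI)
  fix t assume "t \<in> cube k m"
  then show "t \<in> PiE UNIV (\<lambda>i. if i < k then {0..real (m i)} else {0})"
    unfolding cube_def PiE_UNIV_domain by (simp add: Pi_iff)
next
  fix t assume "t \<in> PiE UNIV (\<lambda>i. if i < k then {0..real (m i)} else {0})"
  then have "t i \<in> (if i < k then {0..real (m i)} else {0})" for i
    unfolding PiE_UNIV_domain by (simp add: Pi_iff)
  then show "t \<in> cube k m" unfolding cube_def
    by (smt (verit, best) atLeastAtMost_iff mem_Collect_eq not_le singletonD)
qed

lemma compact_cube: "compact_space (subtopology (Euclidean_space k) (cube k m))"
proof -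
  have "compactin (powertop_real UNIV) (cube k m)"
    unfolding cube_PiE compactin_PiE
  proof (intro disjI2 ballI)
    fix i show "compactin euclideanreal (if i < k then {0..real (m i)} else {0})"
      by (cases "i < k") simp_all
  qed
  moreover have "cube k m \<subseteq> {x. \<forall>i\<ge>k. x i = 0}" by (auto simp: cube_def)
  ultimately have "compactin (Euclidean_space k) (cube k m)"
    unfolding Euclidean_space_def by (simp add: compactin_subtopology)
  then show ?thesis by (rule compact_space_subtopology)
qed

lemma topspace_cube: "topspace (subtopology (Euclidean_space k) (cube k m)) = cube k m"
  by (auto simp: topspace_Euclidean_space cube_def)

lemma Hausdorff_nsphere: "Hausdorff_space (nsphere k)"
  unfolding nsphere_def by (intro Hausdorff_space_subtopology Hausdorff_Euclidean_space)

lemma cont_proj: "continuous_map (subtopology (Euclidean_space k) S) euclideanreal (\<lambda>t. t i)"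
  unfolding Euclidean_space_def
  by (intro continuous_map_from_subtopology continuous_map_product_projection) simp

lemma frc_rel: "(\<lambda>i. a i - of_int \<lfloor>a i\<rfloor>) = frc a" by (simp add: frc_def)

definition gmap :: "nat \<Rightarrow> nat \<times> (nat \<Rightarrow> real) \<Rightarrow> nat \<Rightarrow> real" where
  "gmap k z = Fm k (posf (dec k (fst z)) (snd z)) (la (dec k (fst z))) (lb (dec k (fst z)))"

lemma LL_dec: "l \<in> LL k \<Longrightarrow> dec k l \<in> EE k \<and> enc k (dec k l) = l"
  unfolding LL_def by auto

lemma rel_iff:
  assumes kj: "k = Suc j" and l: "l \<in> LL k" and t: "t \<in> cube k (dN k l)"
    and l': "l' \<in> LL k" and t': "t' \<in> cube k (dN k l')"
  shows "realisation_rel (LL k) (rN k) (sN k) (cN k) (dN k) (l,t) (l',t') \<longleftrightarrow> gmap k (l,t) = gmap k (l',t')"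
proof -
  define x where "x = dec k l"
  define x' where "x' = dec k l'"
  have x: "x \<in> EE k" "l = enc k x" using LL_dec[OF l] by (auto simp: x_def)
  have x': "x' \<in> EE k" "l' = enc k x'" using LL_dec[OF l'] by (auto simp: x'_def)
  have tc: "t \<in> cube k (DD0 x)" using t by (simp add: x_def dN_def)
  have tc': "t' \<in> cube k (DD0 x')" using t' by (simp add: x'_def dN_def)
  define P where "P = posf x t"
  define P' where "P' = posf x' t'"
  have v: "valid k P" "valid k P'" using valid_posf[OF x(1) tc] valid_posf[OF x'(1) tc'] by (auto simp: P_def P'_def)
  have s1: "segment (LL k) (rN k) (sN k) (cN k) (dN k) l (flr t) (ceil t) = enc k (segX k x (flr t) (ceil t))"
    "segX k x (flr t) (ceil t) \<in> EE k"
    using segment_nat[OF x(1) flr_ceil[OF x(1) tc]] x(2) by auto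
  have s2: "segment (LL k) (rN k) (sN k) (cN k) (dN k) l' (flr t') (ceil t') = enc k (segX k x' (flr t') (ceil t'))"
    "segX k x' (flr t') (ceil t') \<in> EE k"
    using segment_nat[OF x'(1) flr_ceil[OF x'(1) tc']] x'(2) by auto
  have "realisation_rel (LL k) (rN k) (sN k) (cN k) (dN k) (l,t) (l',t') \<longleftrightarrow>
      segX k x (flr t) (ceil t) = segX k x' (flr t') (ceil t') \<and> frc t = frc t'"
    unfolding realisation_rel_def using s1 s2 enc_inj by (simp add: frc_rel)
  also have "\<dots> \<longleftrightarrow> (Pset P, Qset P, la x \<and> Pset P = {}, lb x \<and> Qset P = {..<k}) =
       (Pset P', Qset P', la x' \<and> Pset P' = {}, lb x' \<and> Qset P' = {..<k}) \<and> frc P = frc P'"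
    using segX_t[OF x(1) tc] segX_t[OF x'(1) tc'] frc_t[OF x(1) tc] frc_t[OF x'(1) tc']
    by (simp add: P_def P'_def)
  also have "\<dots> \<longleftrightarrow> P = P' \<and> (mx k P = 1 \<or> la x = la x') \<and> (mn k P = 0 \<or> lb x = lb x')"
  proof (cases "P = P'")
    case True
    have k1: "k \<ge> 1" using kj by simp
    show ?thesis using True mx_iff[OF k1 v(1)] mn_iff[OF k1 v(1)] by auto
  next
    case False
    then show ?thesis using valid_eq_iff[OF v] by auto
  qed
  also have "\<dots> \<longleftrightarrow> gmap k (l,t) = gmap k (l',t')"
    using Fm_eq[OF kj v] by (simp add: gmap_def P_def P'_def x_def x'_def)
  finally show ?thesis .
qed

lemma main_pos:
  assumes kj: "k = Suc j"
  shows "realisation k (LL k) (rN k) (sN k) (cN k) (dN k) homeomorphic_space nsphere k"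
  unfolding realisation_def
proof (rule quotient_homeomorphic)
  let ?X = "sum_topology (\<lambda>l. subtopology (Euclidean_space k) (cube k (dN k l))) (LL k)"
  have tX: "topspace ?X = Sigma (LL k) (\<lambda>l. cube k (dN k l))"
    unfolding topspace_sum_topology o_def topspace_cube by simp
  show "compact_space ?X" by (intro compact_space_sum finite_LL compact_cube)
  show "Hausdorff_space (nsphere k)" by (rule Hausdorff_nsphere)
  show "continuous_map ?X (nsphere k) (gmap k)"
  proof (rule continuous_map_from_sum)
    fix l assume l: "l \<in> LL k"
    have x: "dec k l \<in> EE k" using LL_dec[OF l] by simp
    show "continuous_map (subtopology (Euclidean_space k) (cube k (dN k l))) (nsphere k) (\<lambda>t. gmap k (l, t))"
      unfolding gmap_def fst_conv snd_conv
    proof (rule Fm_cont[OF kj])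
      fix c
      show "continuous_map (subtopology (Euclidean_space k) (cube k (dN k l))) euclideanreal
          (\<lambda>t. posf (dec k l) t c)"
        unfolding posf_def by (cases "c \<in> fst (dec k l)") (simp_all add: cont_proj)
    next
      fix t assume "t \<in> topspace (subtopology (Euclidean_space k) (cube k (dN k l)))"
      then have "t \<in> cube k (DD0 (dec k l))" by (simp add: topspace_cube dN_def)
      then show "valid k (posf (dec k l) t)" by (rule valid_posf[OF x])
    qed
  qed
  show "gmap k ` topspace ?X = topspace (nsphere k)"
  proof
    show "gmap k ` topspace ?X \<subseteq> topspace (nsphere k)"
    proof clarify
      fix l t assume "(l,t) \<in> topspace ?X"
      then have l: "l \<in> LL k" and t: "t \<in> cube k (DD0 (dec k l))" using tX by (auto simp: dN_def)
      show "gmap k (l,t) \<in> topspace (nsphere k)"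
        unfolding gmap_def using Fm_sphere[OF kj valid_posf[OF LL_dec[OF l, THEN conjunct1] t]] by simp
    qed
  next
    show "topspace (nsphere k) \<subseteq> gmap k ` topspace ?X"
    proof
      fix y assume "y \<in> topspace (nsphere k)"
      then obtain p a b where p: "valid k p" "y = Fm k p a b" using Fm_surj[OF kj] by blast
      define x0 :: mor where "x0 = ({}, {..<k}, a, b)"
      have x0: "x0 \<in> EE k" by (simp add: x0_def EE_def)
      have pc: "p \<in> cube k (DD0 x0)" using p(1) by (auto simp: cube_def valid_def x0_def)
      have "(enc k x0, p) \<in> topspace ?X" unfolding tX using x0 pc by (simp add: LL_def dN_def)
      moreover have "gmap k (enc k x0, p) = y"
        using x0 p by (simp add: gmap_def posf_def la_def lb_def x0_def)
      ultimately show "y \<in> gmap k ` topspace ?X" by force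
    qed
  qed
  show "realisation_rel (LL k) (rN k) (sN k) (cN k) (dN k) u v \<longleftrightarrow> gmap k u = gmap k v"
    if "u \<in> topspace ?X" "v \<in> topspace ?X" for u v
  proof -
    obtain l t where u: "u = (l,t)" by (cases u)
    obtain l' t' where v: "v = (l',t')" by (cases v)
    have "l \<in> LL k" "t \<in> cube k (dN k l)" "l' \<in> LL k" "t' \<in> cube k (dN k l')"
      using that tX u v by auto
    then show ?thesis unfolding u v by (rule rel_iff[OF kj])
  qed
qed



lemma cube0: "cube 0 m = {\<lambda>i. 0}"
  by (auto simp: cube_def)

lemma kgraph0: "is_kgraph 0 {0,1::nat} (\<lambda>x. x) (\<lambda>x. x) (\<lambda>x y. x) (\<lambda>x i. 0)"
  unfolding is_kgraph_def is_category_def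
proof (intro conjI ballI impI)
  fix m n :: "nat \<Rightarrow> nat" and l :: nat
  assume "m \<in> Nk 0" "n \<in> Nk 0" "l \<in> {0,1}"
  then have m: "m = (\<lambda>i. 0)" "n = (\<lambda>i. 0)" by (auto simp: Nk_def)
  show "\<exists>!(x, y). x \<in> {0, 1} \<and> y \<in> {0, 1} \<and> (\<lambda>i. 0) = m \<and> (\<lambda>i. 0) = n \<and> x = y \<and> x = l"
    using \<open>l \<in> {0,1}\<close> m by (intro ex1I[of _ "(l,l)"]) auto
qed (auto simp: Nk_def)

lemma seg0: "l \<in> {0,1::nat} \<Longrightarrow>
  segment {0,1::nat} (\<lambda>x. x) (\<lambda>x. x) (\<lambda>x y. x) (\<lambda>x i. 0) l (\<lambda>i. 0) (\<lambda>i. 0) = l"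
  unfolding segment_def
proof (rule the_equality)
  assume l: "l \<in> {0,1}"
  then show "l \<in> {0, 1} \<and> (\<lambda>i. 0) = (\<lambda>i. (0::nat) - 0) \<and>
    (\<exists>a\<in>{0, 1}. \<exists>c\<in>{0, 1}. (\<lambda>i. 0) = (\<lambda>i. 0) \<and> a = l \<and> l = c \<and> a = l)"
    using l by (intro conjI; simp)
next
  fix b assume "b \<in> {0, 1} \<and> (\<lambda>i. 0) = (\<lambda>i. (0::nat) - 0) \<and>
    (\<exists>a\<in>{0, 1}. \<exists>c\<in>{0, 1}. (\<lambda>i. 0) = (\<lambda>i. 0) \<and> a = b \<and> b = c \<and> a = l)"
  then obtain a where "a = b" "a = l" by (elim conjE bexE) (simp only:)
  then show "b = l" by simp
qed

lemma flr0: "flr (\<lambda>i. 0) = (\<lambda>i. 0)" "ceil (\<lambda>i. 0) = (\<lambda>i. 0)"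
  by (auto simp: flr_def ceil_def)

definition g0 :: "nat \<times> (nat \<Rightarrow> real) \<Rightarrow> nat \<Rightarrow> real" where
  "g0 z = (\<lambda>i. if i = 0 then (if fst z = 0 then 1 else -1) else 0)"

lemma main0: "realisation 0 {0,1::nat} (\<lambda>x. x) (\<lambda>x. x) (\<lambda>x y. x) (\<lambda>x i. 0) homeomorphic_space nsphere 0"
  unfolding realisation_def
proof (rule quotient_homeomorphic)
  let ?X = "sum_topology (\<lambda>l. subtopology (Euclidean_space 0) (cube 0 ((\<lambda>x i. 0) l))) {0,1::nat}"
  have tX: "topspace ?X = {0,1} \<times> {\<lambda>i. 0}"
    unfolding topspace_sum_topology o_def topspace_cube cube0 by (auto simp: topspace_Euclidean_space)
  have g0t: "g0 z \<in> topspace (nsphere 0)" for z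
    unfolding nsphere by (simp add: g0_def)
  show "compact_space ?X" by (intro compact_space_sum compact_cube) auto
  show "Hausdorff_space (nsphere 0)" by (rule Hausdorff_nsphere)
  show "continuous_map ?X (nsphere 0) g0"
  proof (rule continuous_map_from_sum)
    fix l :: nat
    show "continuous_map (subtopology (Euclidean_space 0) (cube 0 ((\<lambda>x i. 0) l))) (nsphere 0) (\<lambda>x. g0 (l, x))"
    proof -
      have e: "(\<lambda>x. g0 (l, x)) = (\<lambda>x. g0 (l, \<lambda>i. 0))" unfolding g0_def fst_conv by (rule refl)
      show ?thesis unfolding e using g0t[of "(l, \<lambda>i. 0)"] by (simp add: continuous_map_const)
    qed
  qed
  show "g0 ` topspace ?X = topspace (nsphere 0)"
  proof
    show "g0 ` topspace ?X \<subseteq> topspace (nsphere 0)" using g0t by auto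
    show "topspace (nsphere 0) \<subseteq> g0 ` topspace ?X"
    proof
      fix y assume "y \<in> topspace (nsphere 0)"
      then have y: "(y 0)\<^sup>2 = 1" "\<And>i. i > 0 \<Longrightarrow> y i = 0" by (auto simp: nsphere)
      then have "y 0 = 1 \<or> y 0 = -1" by (simp add: power2_eq_1_iff)
      then obtain l :: nat where l: "l \<in> {0,1}" "y = g0 (l, \<lambda>i. 0)"
      proof
        assume "y 0 = 1"
        then have "y = g0 (0, \<lambda>i. 0)" using y(2) by (auto simp: g0_def)
        then show thesis using that by blast
      next
        assume "y 0 = -1"
        then have "y = g0 (1, \<lambda>i. 0)" using y(2) by (auto simp: g0_def)
        then show thesis using that by blast
      qed
      then show "y \<in> g0 ` topspace ?X" unfolding tX by auto
    qed
  qed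
  show "realisation_rel {0,1} (\<lambda>x. x) (\<lambda>x. x) (\<lambda>x y. x) (\<lambda>x i. 0) u v \<longleftrightarrow> g0 u = g0 v"
    if "u \<in> topspace ?X" "v \<in> topspace ?X" for u v
  proof -
    have "u \<in> {0,1} \<times> {\<lambda>i. 0}" "v \<in> {0,1} \<times> {\<lambda>i. 0}" using that tX by simp_all
    then obtain l l' where u: "u = (l, \<lambda>i. 0)" "v = (l', \<lambda>i. 0)" "l \<in> {0,1}" "l' \<in> {0,1}"
      by blast
    have "realisation_rel {0,1} (\<lambda>x. x) (\<lambda>x. x) (\<lambda>x y. x) (\<lambda>x i. 0) u v \<longleftrightarrow>
      segment {0,1::nat} (\<lambda>x. x) (\<lambda>x. x) (\<lambda>x y. x) (\<lambda>x i. 0) l (flr (\<lambda>i. 0)) (ceil (\<lambda>i. 0)) =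
      segment {0,1::nat} (\<lambda>x. x) (\<lambda>x. x) (\<lambda>x y. x) (\<lambda>x i. 0) l' (flr (\<lambda>i. 0)) (ceil (\<lambda>i. 0))"
      unfolding realisation_rel_def u prod.case by simp
    also have "\<dots> \<longleftrightarrow> l = l'"
      unfolding flr0 seg0[OF u(3)] seg0[OF u(4)] ..
    also have "\<dots> \<longleftrightarrow> g0 u = g0 v"
    proof
      assume "l = l'" then show "g0 u = g0 v" using u by simp
    next
      assume "g0 u = g0 v"
      then have "g0 u 0 = g0 v 0" by simp
      then have "(if l = 0 then 1 else -1) = (if l' = 0 then 1 else (-1::real))" using u by (simp add: g0_def)
      then show "l = l'" using u(3,4) by (auto split: if_splits)
    qed
    finally show ?thesis .
  qed
qed

theorem theorem5p1:
  fixes k :: nat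
  shows "\<exists>(L :: nat set) r s cmp d. is_kgraph k L r s cmp d \<and> finite L \<and>
           realisation k L r s cmp d homeomorphic_space nsphere k"
proof (cases k)
  case 0
  then show ?thesis using kgraph0 main0 by blast
next
  case (Suc j)
  then show ?thesis using LL_kgraph finite_LL main_pos[OF Suc] by blast
qed


end
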